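(* Let $T$ be an $\mathcal O$-operator on a Lie algebra $\mathfrak g$ with respect to a representation $(V;\rho)$ and let $T_t=\sum_{i=0}^n\tau_it^i$ be an order $n$ deformation of $T$. Then $T_t$ is extendable if and only if the obstruction class $[\mathrm{Ob}]\in\mathcal H^2(V,\mathfrak g)$ is trivial, where $\mathrm{Ob}(u,v)=\sum_{i+j=n+1,\ i,j\ge1}\big([\tau_i(u),\tau_j(v)]-\tau_i(\rho(\tau_j(u))(v)-\rho(\tau_j(v))(u))\big)$.
   Context: An $\mathcal O$-operator: linear $T:V\to\mathfrak g$ with $[Tu,Tv]=T(\rho(Tu)(v)-\rho(Tv)(u))$. An order $n$ deformation of $T$ is $T_t=\sum_{i=0}^n\tau_it^i$ with $\tau_0=T$, $\tau_i\in\mathrm{Hom}(V,\mathfrak g)$, such that $\sum_{k+l=i,\,k,l\ge0}([\tau_ku,\tau_lv]-\tau_k(\rho(\tau_lu)(v)-\rho(\tau_lv)(u)))=0$ for all $u,v\in V$ and $0\le i\le n$ (i.e. the $\mathcal O$-operator identity holds modulo $t^{n+1}$). It is extendable if there is $\tau_{n+1}\in\mathrm{Hom}(V,\mathfrak g)$ such that $T_t+\tau_{n+1}t^{n+1}$ is an order $n+1$ deformation. $\mathrm{Ob}$ is a $2$-cocycle. $\mathcal H^k(V,\mathfrak g)$ is the Chevalley–Eilenberg cohomology of the Lie algebra $(V,[\cdot,\cdot]_T)$, $[u,v]_T=\rho(Tu)(v)-\rho(Tv)(u)$, with coefficients in the representation $\bar\rho(u)(x)=[Tu,x]+T\rho(x)(u)$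 on $\mathfrak g$; its coboundary is $d_{\bar\rho}f(u_1,\dots,u_{k+1})=\sum_{i}(-1)^{i+1}[Tu_i,f(\dots,\hat u_i,\dots)]+\sum_i(-1)^{i+1}T\rho(f(\dots,\hat u_i,\dots))(u_i)+\sum_{i<j}(-1)^{i+j}f([u_i,u_j]_T,u_1,\dots,\hat u_i,\dots,\hat u_j,\dots,u_{k+1})$. *)

theory Defs
  imports Complex_Main
begin

definition lie_algebra :: "('k::field \<Rightarrow> 'g::ab_group_add \<Rightarrow> 'g) \<Rightarrow> ('g \<Rightarrow> 'g \<Rightarrow> 'g) \<Rightarrow> bool" where
  "lie_algebra sG br \<longleftrightarrow>
     vector_space sG \<and>
     (\<forall>x. Vector_Spaces.linear sG sG (br x)) \<and>
     (\<forall>y. Vector_Spaces.linear sG sG (\<lambda>x. br x y)) \<and>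
     (\<forall>x. br x x = 0) \<and>
     (\<forall>x y z. br x (br y z) + br y (br z x) + br z (br x y) = 0)"

definition lie_rep ::
  "('k::field \<Rightarrow> 'g::ab_group_add \<Rightarrow> 'g) \<Rightarrow> ('g \<Rightarrow> 'g \<Rightarrow> 'g) \<Rightarrow>
   ('k \<Rightarrow> 'v::ab_group_add \<Rightarrow> 'v) \<Rightarrow> ('g \<Rightarrow> 'v \<Rightarrow> 'v) \<Rightarrow> bool" where
  "lie_rep sG br sV rho \<longleftrightarrow>
     vector_space sV \<and>
     (\<forall>x. Vector_Spaces.linear sV sV (rho x)) \<and>
     (\<forall>v. Vector_Spaces.linear sG sV (\<lambda>x. rho x v)) \<and>
     (\<forall>x y v. rho (br x y) v = rho x (rho y v) - rho y (rho x v))"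

definition O_operator ::
  "('k::field \<Rightarrow> 'g::ab_group_add \<Rightarrow> 'g) \<Rightarrow> ('g \<Rightarrow> 'g \<Rightarrow> 'g) \<Rightarrow>
   ('k \<Rightarrow> 'v::ab_group_add \<Rightarrow> 'v) \<Rightarrow> ('g \<Rightarrow> 'v \<Rightarrow> 'v) \<Rightarrow> ('v \<Rightarrow> 'g) \<Rightarrow> bool" where
  "O_operator sG br sV rho T \<longleftrightarrow>
     Vector_Spaces.linear sV sG T \<and>
     (\<forall>u v. br (T u) (T v) = T (rho (T u) v - rho (T v) u))"

text \<open>The coefficient of t^i in the O-operator identity for T_t = sum tau_i t^i.\<close>
definition def_coeff ::
  "('g::ab_group_add \<Rightarrow> 'g \<Rightarrow> 'g) \<Rightarrow> ('g \<Rightarrow> 'v::ab_group_add \<Rightarrow> 'v) \<Rightarrow> (nat \<Rightarrow> 'v \<Rightarrow> 'g)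
   \<Rightarrow> nat \<Rightarrow> 'v \<Rightarrow> 'v \<Rightarrow> 'g" where
  "def_coeff br rho tau i u v =
     (\<Sum>k\<le>i. br (tau k u) (tau (i - k) v) - tau k (rho (tau (i - k) u) v - rho (tau (i - k) v) u))"

text \<open>Order n deformation T_t = sum_{i=0}^n tau_i t^i of T (only tau 0, ..., tau n matter).\<close>
definition order_deformation ::
  "('k::field \<Rightarrow> 'g::ab_group_add \<Rightarrow> 'g) \<Rightarrow> ('g \<Rightarrow> 'g \<Rightarrow> 'g) \<Rightarrow>
   ('k \<Rightarrow> 'v::ab_group_add \<Rightarrow> 'v) \<Rightarrow> ('g \<Rightarrow> 'v \<Rightarrow> 'v) \<Rightarrow> ('v \<Rightarrow> 'g) \<Rightarrow> nat \<Rightarrow>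
   (nat \<Rightarrow> 'v \<Rightarrow> 'g) \<Rightarrow> bool" where
  "order_deformation sG br sV rho T n tau \<longleftrightarrow>
     tau 0 = T \<and>
     (\<forall>i\<le>n. Vector_Spaces.linear sV sG (tau i)) \<and>
     (\<forall>i\<le>n. \<forall>u v. def_coeff br rho tau i u v = 0)"

definition extendable ::
  "('k::field \<Rightarrow> 'g::ab_group_add \<Rightarrow> 'g) \<Rightarrow> ('g \<Rightarrow> 'g \<Rightarrow> 'g) \<Rightarrow>
   ('k \<Rightarrow> 'v::ab_group_add \<Rightarrow> 'v) \<Rightarrow> ('g \<Rightarrow> 'v \<Rightarrow> 'v) \<Rightarrow> ('v \<Rightarrow> 'g) \<Rightarrow> nat \<Rightarrow>
   (nat \<Rightarrow> 'v \<Rightarrow> 'g) \<Rightarrow> bool" where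
  "extendable sG br sV rho T n tau \<longleftrightarrow>
     (\<exists>t. Vector_Spaces.linear sV sG t \<and>
          order_deformation sG br sV rho T (Suc n) (tau(Suc n := t)))"

definition Ob ::
  "('g::ab_group_add \<Rightarrow> 'g \<Rightarrow> 'g) \<Rightarrow> ('g \<Rightarrow> 'v::ab_group_add \<Rightarrow> 'v) \<Rightarrow> (nat \<Rightarrow> 'v \<Rightarrow> 'g)
   \<Rightarrow> nat \<Rightarrow> 'v \<Rightarrow> 'v \<Rightarrow> 'g" where
  "Ob br rho tau n u v =
     (\<Sum>i\<in>{1..n}. br (tau i u) (tau (Suc n - i) v)
                   - tau i (rho (tau (Suc n - i) u) v - rho (tau (Suc n - i) v) u))"

definition bracketT :: "('g \<Rightarrow> 'v::ab_group_add \<Rightarrow> 'v) \<Rightarrow> ('v \<Rightarrow> 'g) \<Rightarrow> 'v \<Rightarrow> 'v \<Rightarrow> 'v" where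
  "bracketT rho T u v = rho (T u) v - rho (T v) u"

definition del_nth :: "nat \<Rightarrow> 'a list \<Rightarrow> 'a list" where
  "del_nth i xs = take i xs @ drop (Suc i) xs"

text \<open>Chevalley-Eilenberg coboundary d_{rho-bar} of (V,[.,.]_T) with coefficients in g
(representation rho-bar(u)x = [Tu,x] + T(rho(x)u)). A k-cochain is a function on lists of
k vectors; d f is evaluated on a list of k+1 vectors u_1..u_{k+1} (indices 0-based here).\<close>
definition cobound ::
  "('k::field \<Rightarrow> 'g::ab_group_add \<Rightarrow> 'g) \<Rightarrow> ('g \<Rightarrow> 'g \<Rightarrow> 'g) \<Rightarrow>
   ('g \<Rightarrow> 'v::ab_group_add \<Rightarrow> 'v) \<Rightarrow> ('v \<Rightarrow> 'g) \<Rightarrow> ('v list \<Rightarrow> 'g) \<Rightarrow> nat \<Rightarrow> 'v list \<Rightarrow> 'g" where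
  "cobound sG br rho T f k us =
     (\<Sum>i<Suc k. sG ((-1) ^ i) (br (T (us ! i)) (f (del_nth i us))))
   + (\<Sum>i<Suc k. sG ((-1) ^ i) (T (rho (f (del_nth i us)) (us ! i))))
   + (\<Sum>i<Suc k. \<Sum>j<Suc k. if i < j then
        sG ((-1) ^ (i + j)) (f (bracketT rho T (us ! i) (us ! j) # del_nth i (del_nth j us)))
      else 0)"

text \<open>The class of a 2-cochain c is trivial in H^2(V,g): c = d f for a 1-cochain f
(a linear map V \<rightarrow> g, viewed as a function on one-element lists).\<close>
definition trivial_class2 ::
  "('k::field \<Rightarrow> 'g::ab_group_add \<Rightarrow> 'g) \<Rightarrow> ('g \<Rightarrow> 'g \<Rightarrow> 'g) \<Rightarrow>
   ('k \<Rightarrow> 'v::ab_group_add \<Rightarrow> 'v) \<Rightarrow> ('g \<Rightarrow> 'v \<Rightarrow> 'v) \<Rightarrow> ('v \<Rightarrow> 'g) \<Rightarrow> ('v \<Rightarrow> 'v \<Rightarrow> 'g) \<Rightarrow> bool" where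
  "trivial_class2 sG br sV rho T c \<longleftrightarrow>
     (\<exists>f. Vector_Spaces.linear sV sG (\<lambda>u. f [u]) \<and>
          (\<forall>u v. c u v = cobound sG br rho T f 1 [u, v]))"

end

theory Submission
  imports Defs
begin

lemma lin_diff: "Vector_Spaces.linear s1 s2 f \<Longrightarrow> f (x - y) = f x - f y"
  by (simp add: linear_iff_module_hom module_hom.diff)

lemma lin_add: "Vector_Spaces.linear s1 s2 f \<Longrightarrow> f (x + y) = f x + f y"
  by (simp add: linear_iff_module_hom module_hom.add)

lemma lin_neg: "Vector_Spaces.linear s1 s2 f \<Longrightarrow> Vector_Spaces.linear s1 s2 (\<lambda>x. - f x)"
  unfolding linear_iff_module_hom by (simp add: module_hom_iff module.scale_minus_right)

lemma vs_one: "vector_space s \<Longrightarrow> s 1 x = x"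
  by (simp add: module_iff_vector_space[symmetric] module.scale_one)

lemma vs_mone: "vector_space s \<Longrightarrow> s (-1) x = - x"
proof -
  assume "vector_space s"
  then have m: "module s" by (simp add: module_iff_vector_space)
  show "s (-1) x = - x" using module.scale_minus_left[OF m, of 1 x] module.scale_one[OF m, of x] by simp
qed

lemma br_anti:
  assumes "lie_algebra sG br"
  shows "br y x = - br x y"
proof -
  have l1: "\<And>a. Vector_Spaces.linear sG sG (br a)" and l2: "\<And>b. Vector_Spaces.linear sG sG (\<lambda>a. br a b)"
    and z: "\<And>a. br a a = 0" using assms unfolding lie_algebra_def by auto
  have "0 = br (x + y) (x + y)" using z by simp
  also have "\<dots> = br x (x + y) + br y (x + y)" using lin_add[OF l2] by simp
  also have "\<dots> = br x y + br y x" using lin_add[OF l1] z by simp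
  finally show ?thesis by (simp add: eq_neg_iff_add_eq_0 add.commute)
qed

lemma coeff_top:
  assumes "tau 0 = T"
  shows "def_coeff br rho (tau(Suc n := t)) (Suc n) u v =
     (br (T u) (t v) - T (rho (t u) v - rho (t v) u)) + Ob br rho tau n u v
     + (br (t u) (T v) - t (rho (T u) v - rho (T v) u))"
proof -
  let ?g = "\<lambda>k. br ((tau(Suc n := t)) k u) ((tau(Suc n := t)) (Suc n - k) v) -
      (tau(Suc n := t)) k (rho ((tau(Suc n := t)) (Suc n - k) u) v - rho ((tau(Suc n := t)) (Suc n - k) v) u)"
  have "def_coeff br rho (tau(Suc n := t)) (Suc n) u v = sum ?g {..n} + ?g (Suc n)"
    unfolding def_coeff_def by simp
  also have "{..n} = insert 0 {1..n}" by auto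
  also have "sum ?g (insert 0 {1..n}) = ?g 0 + sum ?g {1..n}" by simp
  also have "sum ?g {1..n} = Ob br rho tau n u v"
    unfolding Ob_def by (rule sum.cong) auto
  finally show ?thesis using assms by (simp add: fun_upd_def)
qed

theorem theorem5p15:
  fixes sG :: "'k::field \<Rightarrow> 'g::ab_group_add \<Rightarrow> 'g"
    and br :: "'g \<Rightarrow> 'g \<Rightarrow> 'g"
    and sV :: "'k \<Rightarrow> 'v::ab_group_add \<Rightarrow> 'v"
    and rho :: "'g \<Rightarrow> 'v \<Rightarrow> 'v"
    and T :: "'v \<Rightarrow> 'g"
    and tau :: "nat \<Rightarrow> 'v \<Rightarrow> 'g"
    and n :: nat
  assumes "lie_algebra sG br"
    and "lie_rep sG br sV rho"
    and "O_operator sG br sV rho T"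
    and "order_deformation sG br sV rho T n tau"
  shows "extendable sG br sV rho T n tau \<longleftrightarrow>
         trivial_class2 sG br sV rho T (Ob br rho tau n)"
proof -
  have vsG: "vector_space sG" using assms(1) unfolding lie_algebra_def by auto
  have T0: "tau 0 = T" and linT: "Vector_Spaces.linear sV sG T"
    using assms(3,4) unfolding order_deformation_def O_operator_def by auto
  have anti: "\<And>x y. br y x = - br x y" using br_anti[OF assms(1)] .
  have cob: "\<And>f u v. cobound sG br rho T f 1 [u, v] =
      br (T u) (f [v]) - br (T v) (f [u]) + T (rho (f [v]) u) - T (rho (f [u]) v)
      - f [bracketT rho T u v]"
    unfolding cobound_def using vsG
    by (simp add: vs_one vs_mone del_nth_def lessThan_Suc numeral_2_eq_2)
  have rneg: "\<And>x w. rho (- x) w = - rho x w"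
  proof -
    fix x w
    have "Vector_Spaces.linear sG sV (\<lambda>x. rho x w)" using assms(2) unfolding lie_rep_def by auto
    then show "rho (- x) w = - rho x w" using module_hom.neg[of sG sV "\<lambda>x. rho x w" x] by (simp add: linear_iff_module_hom)
  qed
  have bneg: "\<And>a x. br a (- x) = - br a x"
  proof -
    fix a x
    have "Vector_Spaces.linear sG sG (br a)" using assms(1) unfolding lie_algebra_def by auto
    then show "br a (- x) = - br a x" by (simp add: linear_iff_module_hom module_hom.neg)
  qed
  have Tneg: "\<And>x. T (- x) = - T x"
    using linT by (simp add: linear_iff_module_hom module_hom.neg)
  have low: "\<And>t i u v. i \<le> n \<Longrightarrow> def_coeff br rho (tau(Suc n := t)) i u v = def_coeff br rho tau i u v"
    unfolding def_coeff_def by (rule sum.cong) auto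
  have key: "\<And>t u v. Vector_Spaces.linear sV sG t \<Longrightarrow>
      def_coeff br rho (tau(Suc n := t)) (Suc n) u v =
      Ob br rho tau n u v - cobound sG br rho T (\<lambda>l. - t (hd l)) 1 [u, v]"
  proof -
    fix t u v assume lt: "Vector_Spaces.linear sV sG t"
    show "?thesis t u v"
      unfolding coeff_top[where tau=tau, OF T0] cob bracketT_def
      using anti[of "t u" "T v"] Tneg[of "rho (t v) u"] Tneg[of "rho (t u) v"] rneg[of "t u" v] rneg[of "t v" u] bneg[of "T u" "t v"] bneg[of "T v" "t u"]
      by (simp add: lin_diff[OF lt] lin_diff[OF linT] lin_neg algebra_simps)
  qed
  have od: "\<And>t. Vector_Spaces.linear sV sG t \<Longrightarrow>
     order_deformation sG br sV rho T (Suc n) (tau(Suc n := t)) \<longleftrightarrow>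
     (\<forall>u v. Ob br rho tau n u v = cobound sG br rho T (\<lambda>l. - t (hd l)) 1 [u, v])"
  proof -
    fix t assume lt: "Vector_Spaces.linear sV sG t"
    have A: "(tau(Suc n := t)) 0 = T" using T0 by simp
    have B: "\<forall>i\<le>Suc n. Vector_Spaces.linear sV sG ((tau(Suc n := t)) i)"
      using assms(4) lt unfolding order_deformation_def by (auto simp: le_Suc_eq)
    have C: "\<forall>i\<le>n. \<forall>u v. def_coeff br rho (tau(Suc n := t)) i u v = 0"
      using assms(4) low unfolding order_deformation_def by auto
    have "(\<forall>i\<le>Suc n. \<forall>u v. def_coeff br rho (tau(Suc n := t)) i u v = 0) \<longleftrightarrow>
          (\<forall>u v. def_coeff br rho (tau(Suc n := t)) (Suc n) u v = 0)"
      using C by (auto simp: le_Suc_eq)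
    moreover have "(\<forall>u v. def_coeff br rho (tau(Suc n := t)) (Suc n) u v = 0) \<longleftrightarrow>
       (\<forall>u v. Ob br rho tau n u v = cobound sG br rho T (\<lambda>l. - t (hd l)) 1 [u, v])"
      using key[OF lt] by (metis eq_iff_diff_eq_0)
    ultimately show "?thesis t" unfolding order_deformation_def using A B by blast
  qed
  show ?thesis
  proof
    assume "extendable sG br sV rho T n tau"
    then obtain t where lt: "Vector_Spaces.linear sV sG t"
      and o: "order_deformation sG br sV rho T (Suc n) (tau(Suc n := t))"
      unfolding extendable_def by blast
    show "trivial_class2 sG br sV rho T (Ob br rho tau n)"
      unfolding trivial_class2_def
    proof (intro exI[of _ "\<lambda>l. - t (hd l)"] conjI)
      show "Vector_Spaces.linear sV sG (\<lambda>u. - t (hd [u]))" using lin_neg[OF lt] by simp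
      show "\<forall>u v. Ob br rho tau n u v = cobound sG br rho T (\<lambda>l. - t (hd l)) 1 [u, v]"
        using od[OF lt] o by blast
    qed
  next
    assume "trivial_class2 sG br sV rho T (Ob br rho tau n)"
    then obtain f where lf: "Vector_Spaces.linear sV sG (\<lambda>u. f [u])"
      and e: "\<forall>u v. Ob br rho tau n u v = cobound sG br rho T f 1 [u, v]"
      unfolding trivial_class2_def by blast
    define t where "t = (\<lambda>u. - f [u])"
    have lt: "Vector_Spaces.linear sV sG t" unfolding t_def using lin_neg[OF lf] .
    have "\<forall>u v. Ob br rho tau n u v = cobound sG br rho T (\<lambda>l. - t (hd l)) 1 [u, v]"
    proof (intro allI)
      fix u v
      show "Ob br rho tau n u v = cobound sG br rho T (\<lambda>l. - t (hd l)) 1 [u, v]"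
        using e unfolding cob t_def by simp
    qed
    then show "extendable sG br sV rho T n tau"
      unfolding extendable_def using od[OF lt] lt by blast
  qed
qed

end
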